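(* Let $r\in\mathbb{N}$ with $r\ge2$, $v\in\mathbb{YF}^r$ and $u\in\mathbb{YF}$. Then $$\sum_{w\in S_r(u)} d_r(w,v)=r^{d(v)-d(u)}\, d_1(u,s(v)),$$ where $S_r(u)=\{w\in\mathbb{YF}^r: s(w)=u\}$.
   Context: Fix $r\in\mathbb{N}$. Words and statistics. Consider finite words over $\{1_1,\dots,1_r,2\}$. A letter $1_i$ is a one with digit value $1$; $2$ is a two with digit value $2$. $|x|$ is the sum of digit values, $d(x)$ the number of twos. The graph $\mathbb{YF}^r$. It is the graded graph on all finite words, graded by $|\cdot|$. From $x$ there is a downward edge to every word obtained by one of two operations: (i) delete the leftmost one; (ii) replace a $2$ lying left of the leftmost one (any $2$ if there are no ones) by $1_i$, with arbitrary $i$. $\mathbb{YF}=\mathbb{YF}^1$ (with $1:=1_1$), the Young–Fibonacci graph. $s:\mathbb{YF}^r\to\mathbb{YF}$ replaces every $1_i$ by $1$. Path counts. $d_r(x,y)$ is the number of downward paths $y=y_n\to\dots\to y_m=x$ in $\mathbb{YF}^r$ with $|y_i|=i$ ($0$ if none); $d_1$ is the count in $\mathbb{YF}$. *)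

theory Defs
  imports Complex_Main
begin

text \<open>Letters: One i stands for 1_i (digit value 1), Two for the letter 2 (digit value 2).\<close>
datatype letter = One nat | Two

type_synonym word = "letter list"

fun val :: "letter \<Rightarrow> nat" where
  "val (One i) = 1" | "val Two = 2"

definition wt :: "word \<Rightarrow> nat" where
  "wt x = sum_list (map val x)"

definition ntwos :: "word \<Rightarrow> nat" where
  "ntwos x = length (filter (\<lambda>a. a = Two) x)"

definition valid :: "nat \<Rightarrow> word \<Rightarrow> bool" where
  "valid r x \<longleftrightarrow> (\<forall>i. One i \<in> set x \<longrightarrow> 1 \<le> i \<and> i \<le> r)"

text \<open>Words reachable from x by one downward edge of YF^r.
 (i) delete the leftmost one; (ii) replace a 2 lying left of the leftmost one
 (i.e. in the initial run of twos) by 1_i, 1 <= i <= r.\<close>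
definition down :: "nat \<Rightarrow> word \<Rightarrow> word set" where
  "down r x =
     {xs @ ys | xs i ys. x = xs @ One i # ys \<and> set xs \<subseteq> {Two}}
   \<union> {x[j := One i] | j i. j < length x \<and> (\<forall>k\<le>j. x ! k = Two) \<and> 1 \<le> i \<and> i \<le> r}"

text \<open>d_r(x,y): number of downward paths y = y_n \<rightarrow> ... \<rightarrow> y_m = x in YF^r,
 represented as vertex lists starting at y and ending at x.\<close>
definition dpaths :: "nat \<Rightarrow> word \<Rightarrow> word \<Rightarrow> word list set" where
  "dpaths r x y = {ps. ps \<noteq> [] \<and> hd ps = y \<and> last ps = x \<and> (\<forall>w\<in>set ps. valid r w)
      \<and> (\<forall>k. Suc k < length ps \<longrightarrow> ps ! Suc k \<in> down r (ps ! k)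
                                 \<and> wt (ps ! Suc k) + 1 = wt (ps ! k))}"

definition dcount :: "nat \<Rightarrow> word \<Rightarrow> word \<Rightarrow> nat" where
  "dcount r x y = card (dpaths r x y)"

definition sproj :: "word \<Rightarrow> word" where
  "sproj x = map (\<lambda>a. case a of One i \<Rightarrow> One 1 | Two \<Rightarrow> Two) x"

definition Sfib :: "nat \<Rightarrow> word \<Rightarrow> word set" where
  "Sfib r u = {w. valid r w \<and> sproj w = u}"

end

theory Submission
  imports Defs
begin

definition D1 :: "word \<Rightarrow> word set" where
  "D1 x = {xs @ ys | xs i ys. x = xs @ One i # ys \<and> set xs \<subseteq> {Two}}"

definition JJ :: "word \<Rightarrow> nat set" where
  "JJ x = {j. j < length x \<and> (\<forall>k\<le>j. x ! k = Two)}"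

lemma down_split: "down r x = D1 x \<union> (\<lambda>(j,i). x[j := One i]) ` (JJ x \<times> {1..r})"
proof -
  have "{x[j := One i] | j i. j < length x \<and> (\<forall>k\<le>j. x ! k = Two) \<and> 1 \<le> i \<and> i \<le> r}
     = (\<lambda>(j,i). x[j := One i]) ` (JJ x \<times> {1..r})"
    unfolding JJ_def by (auto simp: image_iff; blast)
  then show ?thesis unfolding down_def D1_def by simp
qed

lemma finite_D1: "finite (D1 x)"
proof -
  have "D1 x \<subseteq> (\<lambda>k. take k x @ drop (Suc k) x) ` {..<length x}"
  proof
    fix y assume "y \<in> D1 x"
    then obtain xs i ys where "y = xs @ ys" "x = xs @ One i # ys" unfolding D1_def by blast
    then show "y \<in> (\<lambda>k. take k x @ drop (Suc k) x) ` {..<length x}"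
      by (intro image_eqI[of _ _ "length xs"]) auto
  qed
  then show ?thesis by (rule finite_subset) auto
qed

lemma finite_JJ: "finite (JJ x)"
  by (rule finite_subset[of _ "{..<length x}"]) (auto simp: JJ_def)

lemma finite_down: "finite (down r x)"
  unfolding down_split using finite_D1 finite_JJ by auto

lemma D1_unique:
  "set xs \<subseteq> {Two} \<Longrightarrow> set xs' \<subseteq> {Two} \<Longrightarrow> xs @ One i # ys = xs' @ One i' # ys'
   \<Longrightarrow> xs = xs' \<and> i = i' \<and> ys = ys'"
proof (induction xs arbitrary: xs')
  case Nil then show ?case by (cases xs') auto
next
  case (Cons a xs) then show ?case by (cases xs') auto
qed

lemma wt_update: "j < length x \<Longrightarrow> wt (x[j:=a]) + val (x!j) = wt x + val a"
proof (induction x arbitrary: j)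
  case Nil then show ?case by simp
next
  case (Cons b x) then show ?case by (cases j) (auto simp: wt_def)
qed

lemma ntwos_update: "j < length x \<Longrightarrow> x!j = Two \<Longrightarrow> ntwos (x[j:=One i]) + 1 = ntwos x"
proof (induction x arbitrary: j)
  case Nil then show ?case by simp
next
  case (Cons b x) then show ?case by (cases j) (auto simp: ntwos_def)
qed

lemma ntwos_sproj: "ntwos (sproj x) = ntwos x"
proof (induction x)
  case Nil then show ?case by (simp add: ntwos_def sproj_def)
next
  case (Cons a x) then show ?case by (cases a) (auto simp: ntwos_def sproj_def)
qed

lemma wt_down: "y \<in> down r x \<Longrightarrow> wt y + 1 = wt x"
proof -
  assume "y \<in> down r x"
  then consider (a) xs i ys where "y = xs @ ys" "x = xs @ One i # ys"
    | (b) j i where "y = x[j := One i]" "j < length x" "x ! j = Two"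
    unfolding down_def by blast
  then show ?thesis
  proof cases
    case a then show ?thesis by (simp add: wt_def)
  next
    case b then show ?thesis using wt_update[of j x "One i"] by simp
  qed
qed

lemma valid_down: "valid r x \<Longrightarrow> y \<in> down r x \<Longrightarrow> valid r y"
proof -
  assume v: "valid r x" and "y \<in> down r x"
  then consider (a) xs i ys where "y = xs @ ys" "x = xs @ One i # ys"
    | (b) j i where "y = x[j := One i]" "1 \<le> i" "i \<le> r"
    unfolding down_def by blast
  then show ?thesis
  proof cases
    case a then show ?thesis using v by (auto simp: valid_def)
  next
    case b then show ?thesis using v set_update_subset_insert[of x j "One i"]
      by (auto simp: valid_def)
  qed
qed

lemma dpaths_valid: "ps \<in> dpaths r w v \<Longrightarrow> valid r v"
  unfolding dpaths_def by auto

lemma SE: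
  assumes vv: "valid r v"
  shows "dpaths r w v = (if w = v then {[v]} else {}) \<union> (\<Union>y\<in>down r v. (#) v ` dpaths r w y)"
proof (rule set_eqI, rule iffI)
  fix ps assume "ps \<in> dpaths r w v"
  then have ps: "ps \<noteq> []" "hd ps = v" "last ps = w" "\<forall>x\<in>set ps. valid r x"
    "\<forall>k. Suc k < length ps \<longrightarrow> ps!Suc k \<in> down r (ps!k) \<and> wt (ps!Suc k)+1 = wt(ps!k)"
    by (simp_all add: dpaths_def)
  then obtain qs where qs: "ps = v # qs" by (cases ps) auto
  show "ps \<in> (if w = v then {[v]} else {}) \<union> (\<Union>y\<in>down r v. (#) v ` dpaths r w y)"
  proof (cases "qs = []")
    case True then show ?thesis using ps qs by auto
  next
    case False
    have y: "hd qs \<in> down r v" using ps(5)[rule_format, of 0] qs False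
      by (simp add: hd_conv_nth)
    have "qs \<in> dpaths r w (hd qs)" unfolding dpaths_def
    proof (intro CollectI conjI allI impI)
      show "qs \<noteq> []" by fact
      show "hd qs = hd qs" by simp
      show "last qs = w" using ps(3) qs False by simp
      show "\<forall>x\<in>set qs. valid r x" using ps(4) qs by simp
      fix k assume "Suc k < length qs"
      then show "qs ! Suc k \<in> down r (qs ! k)" "wt (qs ! Suc k) + 1 = wt (qs ! k)"
        using ps(5)[rule_format, of "Suc k"] qs by simp_all
    qed
    then show ?thesis using y qs by blast
  qed
next
  fix ps assume "ps \<in> (if w = v then {[v]} else {}) \<union> (\<Union>y\<in>down r v. (#) v ` dpaths r w y)"
  then consider (a) "w = v" "ps = [v]" | (b) y qs where "y \<in> down r v" "qs \<in> dpaths r w y" "ps = v # qs"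
    by (auto split: if_splits)
  then show "ps \<in> dpaths r w v"
  proof cases
    case a then show ?thesis using vv by (simp add: dpaths_def)
  next
    case b
    then have q: "qs \<noteq> []" "hd qs = y" "last qs = w" "\<forall>x\<in>set qs. valid r x"
      "\<forall>k. Suc k < length qs \<longrightarrow> qs!Suc k \<in> down r (qs!k) \<and> wt (qs!Suc k)+1 = wt(qs!k)"
      by (simp_all add: dpaths_def)
    show ?thesis unfolding dpaths_def
    proof (intro CollectI conjI allI impI)
      show "ps \<noteq> []" "hd ps = v" using b by simp_all
      show "last ps = w" using b q by simp
      show "\<forall>x\<in>set ps. valid r x" using b q vv by simp
      fix k assume k: "Suc k < length ps"
      have "ps ! Suc k \<in> down r (ps ! k) \<and> wt (ps ! Suc k) + 1 = wt (ps ! k)"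
      proof (cases k)
        case 0 then show ?thesis using b q wt_down[OF b(1)] by (simp add: hd_conv_nth)
      next
        case (Suc m) then show ?thesis using b q(5)[rule_format, of m] k by simp
      qed
      then show "ps ! Suc k \<in> down r (ps ! k)" "wt (ps ! Suc k) + 1 = wt (ps ! k)" by simp_all
    qed
  qed
qed

lemma finite_dpaths: "finite (dpaths r w v)"
proof (induction "wt v" arbitrary: v rule: less_induct)
  case less
  show ?case
  proof (cases "valid r v")
    case False
    then have "dpaths r w v = {}" using dpaths_valid by blast
    then show ?thesis by simp
  next
    case True
    have "finite (dpaths r w y)" if "y \<in> down r v" for y
      using less.hyps wt_down[OF that] by simp
    then show ?thesis by (subst SE[OF True]) (auto intro: finite_down)
  qed
qed

lemma dcount_rec:
  assumes vv: "valid r v"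
  shows "dcount r w v = (if w = v then 1 else 0) + (\<Sum>y\<in>down r v. dcount r w y)"
proof -
  have disj1: "(if w = v then {[v]} else {}) \<inter> (\<Union>y\<in>down r v. (#) v ` dpaths r w y) = {}"
    by (auto simp: dpaths_def)
  have c1: "card (if w = v then {[v]} else {}) = (if w = v then 1 else 0)" by simp
  have c2: "card (\<Union>y\<in>down r v. (#) v ` dpaths r w y) = (\<Sum>y\<in>down r v. card ((#) v ` dpaths r w y))"
  proof (rule card_UN_disjoint)
    show "finite (down r v)" by (rule finite_down)
    show "\<forall>i\<in>down r v. finite ((#) v ` dpaths r w i)" using finite_dpaths by auto
    show "\<forall>i\<in>down r v. \<forall>j\<in>down r v. i \<noteq> j \<longrightarrow> (#) v ` dpaths r w i \<inter> (#) v ` dpaths r w j = {}"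
      by (auto simp: dpaths_def)
  qed
  have c3: "card ((#) v ` dpaths r w y) = card (dpaths r w y)" for y
    by (rule card_image) (simp add: inj_on_def)
  show ?thesis unfolding dcount_def
    apply (subst SE[OF vv])
    apply (subst card_Un_disjoint)
    using disj1 finite_dpaths finite_down c1 c2 c3 by auto
qed


lemma sproj_twos: "set xs \<subseteq> {Two} \<Longrightarrow> sproj xs = xs"
  by (induction xs) (auto simp: sproj_def)

lemma sproj_append: "sproj (xs @ ys) = sproj xs @ sproj ys"
  by (simp add: sproj_def)

lemma sproj_Cons: "sproj (a # ys) = (case a of One i \<Rightarrow> One 1 | Two \<Rightarrow> Two) # sproj ys"
  by (simp add: sproj_def)

lemma D1_sproj: "sproj ` D1 v = D1 (sproj v)"
proof
  show "sproj ` D1 v \<subseteq> D1 (sproj v)"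
  proof
    fix y' assume "y' \<in> sproj ` D1 v"
    then obtain xs i ys where h: "y' = sproj (xs @ ys)" "v = xs @ One i # ys" "set xs \<subseteq> {Two}"
      unfolding D1_def by blast
    then have "sproj v = xs @ One 1 # sproj ys" "y' = xs @ sproj ys"
      by (simp_all add: sproj_append sproj_Cons sproj_twos)
    then show "y' \<in> D1 (sproj v)" using h(3) unfolding D1_def by blast
  qed
next
  show "D1 (sproj v) \<subseteq> sproj ` D1 v"
  proof
    fix y' assume "y' \<in> D1 (sproj v)"
    then obtain xs i ys where h: "y' = xs @ ys" "sproj v = xs @ One i # ys" "set xs \<subseteq> {Two}"
      unfolding D1_def by blast
    then obtain us z zs where u: "v = us @ z # zs" "xs = sproj us"
       "(case z of One i \<Rightarrow> One (Suc 0) | Two \<Rightarrow> Two) = One i" "ys = sproj zs"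
      unfolding sproj_def by (auto simp: map_eq_append_conv map_eq_Cons_conv)
    obtain j where z: "z = One j" using u(3) by (cases z) auto
    have "set us \<subseteq> {Two}"
    proof
      fix a assume "a \<in> set us"
      then have "(case a of One i \<Rightarrow> One 1 | Two \<Rightarrow> Two) \<in> set xs" using u(2) by (auto simp: sproj_def)
      then show "a \<in> {Two}" using h(3) by (cases a) auto
    qed
    then have "us @ zs \<in> D1 v" using u z unfolding D1_def by blast
    moreover have "sproj (us @ zs) = y'" using h u by (simp add: sproj_append)
    ultimately show "y' \<in> sproj ` D1 v" by blast
  qed
qed

lemma D1_nt: "y \<in> D1 v \<Longrightarrow> ntwos y = ntwos v"
  unfolding D1_def ntwos_def by auto

lemma D1_len: "y \<in> D1 v \<Longrightarrow> length y + 1 = length v"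
  unfolding D1_def by auto

lemma inj_D1: "inj_on f (D1 v)"
proof (rule inj_onI)
  fix a b assume "a \<in> D1 v" "b \<in> D1 v"
  then obtain xs i ys xs' i' ys' where "a = xs @ ys" "v = xs @ One i # ys" "set xs \<subseteq> {Two}"
    "b = xs' @ ys'" "v = xs' @ One i' # ys'" "set xs' \<subseteq> {Two}"
    unfolding D1_def by blast
  then show "a = b" using D1_unique[of xs xs' i ys i' ys'] by auto
qed

lemma JJ_sproj: "JJ (sproj v) = JJ v"
proof -
  have "sproj v ! k = Two \<longleftrightarrow> v ! k = Two" if "k < length v" for k
    using that by (cases "v ! k") (auto simp: sproj_def)
  then show ?thesis unfolding JJ_def by (auto simp: sproj_def)
qed

lemma inj_D2: "inj_on (\<lambda>(j,i). v[j:=One i]) (JJ v \<times> A)"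
proof (rule inj_onI, clarify)
  fix j i j' i' assume a: "j \<in> JJ v" "j' \<in> JJ v" "v[j := One i] = v[j' := One i']"
  then have l: "j < length v" "j' < length v" "v ! j = Two" "v ! j' = Two" unfolding JJ_def by auto
  have "j = j'"
  proof (rule ccontr)
    assume "j \<noteq> j'"
    then have "v[j := One i] ! j = One i" "v[j' := One i'] ! j = Two" using l by auto
    then show False using a(3) by simp
  qed
  moreover then have "i = i'" using a(3) l by (metis letter.inject nth_list_update_eq)
  ultimately show "j = j' \<and> i = i'" by simp
qed

lemma sumB:
  fixes g :: "word \<Rightarrow> real"
  assumes r: "r \<ge> 1"
  shows "(\<Sum>y\<in>down r v. real r powi (int (ntwos y) - c) * g (sproj y))
       = real r powi (int (ntwos v) - c) * (\<Sum>y\<in>down 1 (sproj v). g y)"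
proof -
  define P where "P = (\<lambda>n::nat. real r powi (int n - c))"
  define F where "F = (\<lambda>v. \<lambda>(j::nat,i). v[j:=One i])"
  have dec: "down r' x = D1 x \<union> F x ` (JJ x \<times> {1..r'})" for r' x
    unfolding F_def by (rule down_split)
  have disj: "D1 x \<inter> F x ` (JJ x \<times> {1..r'}) = {}" for x r'
    using D1_len unfolding F_def by fastforce
  have fin: "finite (F x ` (JJ x \<times> {1..r'}))" for x r'
    using finite_JJ by auto
  have p1: "(\<Sum>y\<in>D1 v. P (ntwos y) * g (sproj y)) = P (ntwos v) * (\<Sum>y\<in>D1 (sproj v). g y)"
  proof -
    have "(\<Sum>y\<in>D1 v. P (ntwos y) * g (sproj y)) = (\<Sum>y\<in>D1 v. P (ntwos v) * g (sproj y))"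
      by (rule sum.cong) (auto simp: D1_nt)
    also have "\<dots> = P (ntwos v) * (\<Sum>y\<in>D1 v. g (sproj y))" by (simp add: sum_distrib_left)
    also have "(\<Sum>y\<in>D1 v. g (sproj y)) = (\<Sum>y\<in>sproj ` D1 v. g y)"
      by (simp add: sum.reindex[OF inj_D1])
    finally show ?thesis by (simp add: D1_sproj)
  qed
  have p2: "(\<Sum>y\<in>F v ` (JJ v \<times> {1..r}). P (ntwos y) * g (sproj y))
      = P (ntwos v) * (\<Sum>y\<in>F (sproj v) ` (JJ (sproj v) \<times> {1..1}). g y)"
  proof -
    have "(\<Sum>y\<in>F v ` (JJ v \<times> {1..r}). P (ntwos y) * g (sproj y))
        = (\<Sum>p\<in>JJ v \<times> {1..r}. P (ntwos (F v p)) * g (sproj (F v p)))"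
      unfolding F_def by (simp add: sum.reindex[OF inj_D2])
    also have "\<dots> = (\<Sum>j\<in>JJ v. \<Sum>i\<in>{1..r}. P (ntwos (F v (j,i))) * g (sproj (F v (j,i))))"
      by (simp add: sum.cartesian_product)
    also have "\<dots> = (\<Sum>j\<in>JJ v. \<Sum>i\<in>{1..r}. P (ntwos v - 1) * g ((sproj v)[j := One 1]))"
    proof (rule sum.cong[OF refl], rule sum.cong[OF refl])
      fix j i assume "j \<in> JJ v"
      then have "j < length v" "v ! j = Two" unfolding JJ_def by auto
      then have "ntwos (F v (j,i)) = ntwos v - 1" "sproj (F v (j,i)) = (sproj v)[j := One 1]"
        using ntwos_update[of j v i] by (auto simp: F_def sproj_def map_update)
      then show "P (ntwos (F v (j,i))) * g (sproj (F v (j,i))) = P (ntwos v - 1) * g ((sproj v)[j := One 1])"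
        by simp
    qed
    also have "\<dots> = (\<Sum>j\<in>JJ v. P (ntwos v) * g ((sproj v)[j := One 1]))"
    proof (rule sum.cong[OF refl])
      fix j assume "j \<in> JJ v"
      then have "j < length v" "v ! j = Two" unfolding JJ_def by auto
      then have n: "ntwos v \<ge> 1" using ntwos_update[of j v 1] by simp
      have "real r * P (ntwos v - 1) = P (ntwos v)"
        unfolding P_def using n r power_int_minus_mult[of "real r" "int (ntwos v) - c"]
        by (simp add: of_nat_diff algebra_simps)
      then show "(\<Sum>i\<in>{1..r}. P (ntwos v - 1) * g ((sproj v)[j := One 1])) = P (ntwos v) * g ((sproj v)[j := One 1])"
        by simp
    qed
    also have "\<dots> = P (ntwos v) * (\<Sum>j\<in>JJ v. g ((sproj v)[j := One 1]))"
      by (simp add: sum_distrib_left)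
    also have "(\<Sum>j\<in>JJ v. g ((sproj v)[j := One 1])) = (\<Sum>p\<in>JJ (sproj v) \<times> {1..1}. g (F (sproj v) p))"
      unfolding JJ_sproj by (rule sum.reindex_bij_witness[where j="\<lambda>p. (p,1)" and i=fst]) (auto simp: F_def)
    also have "\<dots> = (\<Sum>y\<in>F (sproj v) ` (JJ (sproj v) \<times> {1..1}). g y)"
      unfolding F_def by (simp add: sum.reindex[OF inj_D2])
    finally show ?thesis .
  qed
  have "(\<Sum>y\<in>down r v. P (ntwos y) * g (sproj y))
      = (\<Sum>y\<in>D1 v. P (ntwos y) * g (sproj y)) + (\<Sum>y\<in>F v ` (JJ v \<times> {1..r}). P (ntwos y) * g (sproj y))"
    unfolding dec by (rule sum.union_disjoint[OF finite_D1 fin disj])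
  also have "\<dots> = P (ntwos v) * ((\<Sum>y\<in>D1 (sproj v). g y) + (\<Sum>y\<in>F (sproj v) ` (JJ (sproj v) \<times> {1..1}). g y))"
    using p1 p2 by (simp add: algebra_simps)
  also have "(\<Sum>y\<in>D1 (sproj v). g y) + (\<Sum>y\<in>F (sproj v) ` (JJ (sproj v) \<times> {1..1}). g y) = (\<Sum>y\<in>down 1 (sproj v). g y)"
    unfolding dec by (rule sum.union_disjoint[OF finite_D1 fin disj, symmetric])
  finally show ?thesis unfolding P_def .
qed


lemma finite_Sfib: "finite (Sfib r u)"
proof -
  let ?A = "insert Two (One ` {1..r})"
  have "Sfib r u \<subseteq> {w. set w \<subseteq> ?A \<and> length w = length u}"
  proof
    fix w assume "w \<in> Sfib r u"
    then have "valid r w" "sproj w = u" unfolding Sfib_def by auto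
    moreover have "set w \<subseteq> ?A"
    proof
      fix a assume "a \<in> set w"
      show "a \<in> ?A"
      proof (cases a)
        case (One i)
        then have "1 \<le> i \<and> i \<le> r" using \<open>a \<in> set w\<close> \<open>valid r w\<close> unfolding valid_def by blast
        then show ?thesis using One by auto
      qed simp
    qed
    ultimately show "w \<in> {w. set w \<subseteq> ?A \<and> length w = length u}" by (auto simp: sproj_def)
  qed
  moreover have "finite {w. set w \<subseteq> ?A \<and> length w = length u}"
    by (rule finite_lists_length_eq) simp
  ultimately show ?thesis by (rule finite_subset)
qed

lemma valid_sproj: "valid 1 (sproj v)"
  unfolding valid_def sproj_def by (auto split: letter.splits)

lemma main_gen:
  assumes r: "r \<ge> 1"
  shows "valid r v \<Longrightarrow> (\<Sum>w\<in>Sfib r u. real (dcount r w v))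
           = real r powi (int (ntwos v) - int (ntwos u)) * real (dcount 1 u (sproj v))"
proof (induction "wt v" arbitrary: v rule: less_induct)
  case less
  let ?S = "Sfib r u"
  let ?P = "\<lambda>y. real r powi (int (ntwos y) - int (ntwos u))"
  have "(\<Sum>w\<in>?S. real (dcount r w v))
      = (\<Sum>w\<in>?S. (if w = v then 1 else 0) + (\<Sum>y\<in>down r v. real (dcount r w y)))"
    by (rule sum.cong[OF refl]) (simp add: dcount_rec[OF less.prems])
  also have "\<dots> = (\<Sum>w\<in>?S. (if w = v then 1 else 0)) + (\<Sum>y\<in>down r v. \<Sum>w\<in>?S. real (dcount r w y))"
    by (simp add: sum.distrib sum.swap[of _ _ ?S])
  also have "(\<Sum>w\<in>?S. (if w = v then 1 else 0)) = (if sproj v = u then 1 else (0::real))"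
    using finite_Sfib[of r u] less.prems by (simp add: Sfib_def)
  also have "(\<Sum>y\<in>down r v. \<Sum>w\<in>?S. real (dcount r w y))
      = (\<Sum>y\<in>down r v. ?P y * real (dcount 1 u (sproj y)))"
  proof (rule sum.cong[OF refl])
    fix y assume y: "y \<in> down r v"
    show "(\<Sum>w\<in>?S. real (dcount r w y)) = ?P y * real (dcount 1 u (sproj y))"
      using less.hyps[of y] wt_down[OF y] valid_down[OF less.prems y] by simp
  qed
  also have "\<dots> = ?P v * (\<Sum>y\<in>down 1 (sproj v). real (dcount 1 u y))"
    by (rule sumB[OF r])
  also have "(if sproj v = u then 1 else (0::real)) = ?P v * (if u = sproj v then 1 else 0)"
    using ntwos_sproj[of v] by auto
  finally show ?case
    by (subst dcount_rec[OF valid_sproj]) (simp add: algebra_simps)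
qed

theorem mainTheorem8:
  fixes r :: nat and v u :: word
  assumes "r \<ge> 2" and "valid r v" and "valid 1 u"
  shows "(\<Sum>w\<in>Sfib r u. real (dcount r w v))
           = real r powi (int (ntwos v) - int (ntwos u)) * real (dcount 1 u (sproj v))"
  using main_gen[of r v u] assms by simp

end
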